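(* Let $A,B$ be nonzero ideals of $D$ with $(A+B)^{\ast}=D$. (i) If $I$ is a $\ast$-homog ideal of $D$ and $AB\subseteq I$, then $A\subseteq I$ or $B\subseteq I$. (ii) If $B$ is a $\ast$-homog ideal, then $(AB)^{\ast}D_{M(B)}\cap D=B$.
   Context: $D$ is an integral domain and $\ast$ is a star operation on $D$ of finite character. A $\ast$-ideal is a nonzero fractional ideal $I$ with $I^\ast=I$; it is of finite type if $I=J^\ast$ for some nonzero finitely generated $J$. A maximal $\ast$-ideal is an integral $\ast$-ideal maximal among proper integral $\ast$-ideals. A $\ast$-homog ideal of $D$ is an integral $\ast$-ideal $I$ of finite type with $I\subsetneq D$ such that $(J+L)^{\ast}\neq D$ for every pair $J,L$ of proper integral $\ast$-ideals of finite type containing $I$. Every $\ast$-homog ideal $I$ lies in exactly one maximal $\ast$-ideal, denoted $M(I)$. *)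

theory Defs
  imports Main
begin

text \<open>The integral domain D is modelled as a subset of a field type 'k which is
its quotient field (every element of 'k is a quotient of elements of D).
Fractional ideals are subsets of 'k.\<close>

definition subring :: "('k::field) set \<Rightarrow> bool" where
  "subring D \<longleftrightarrow> 0 \<in> D \<and> 1 \<in> D \<and>
     (\<forall>x\<in>D. \<forall>y\<in>D. x + y \<in> D \<and> x - y \<in> D \<and> x * y \<in> D)"

definition domain_with_qf :: "('k::field) set \<Rightarrow> bool" where
  "domain_with_qf D \<longleftrightarrow> subring D \<and>
     (\<forall>x. \<exists>a\<in>D. \<exists>b\<in>D. b \<noteq> 0 \<and> x = a / b)"

definition dmod :: "('k::field) set \<Rightarrow> 'k set \<Rightarrow> bool" where
  "dmod D I \<longleftrightarrow> 0 \<in> I \<and> (\<forall>x\<in>I. \<forall>y\<in>I. x + y \<in> I) \<and> (\<forall>d\<in>D. \<forall>x\<in>I. d * x \<in> I)"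

definition frac_ideal :: "('k::field) set \<Rightarrow> 'k set \<Rightarrow> bool" where
  "frac_ideal D I \<longleftrightarrow> dmod D I \<and> I \<noteq> {0} \<and> (\<exists>d\<in>D. d \<noteq> 0 \<and> (\<forall>x\<in>I. d * x \<in> D))"

definition dgen :: "('k::field) set \<Rightarrow> 'k set \<Rightarrow> 'k set" where
  "dgen D S = {\<Sum>i<(n::nat). c i * s i | n c s. \<forall>i<n. c i \<in> D \<and> s i \<in> S}"

definition fg_ideal :: "('k::field) set \<Rightarrow> 'k set \<Rightarrow> bool" where
  "fg_ideal D J \<longleftrightarrow> frac_ideal D J \<and> (\<exists>S. finite S \<and> J = dgen D S)"

definition ideal_sum :: "('k::field) set \<Rightarrow> 'k set \<Rightarrow> 'k set" where
  "ideal_sum I J = {x + y | x y. x \<in> I \<and> y \<in> J}"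

definition ideal_prod :: "('k::field) set \<Rightarrow> 'k set \<Rightarrow> 'k set" where
  "ideal_prod I J = {\<Sum>i<(n::nat). f i * g i | n f g. \<forall>i<n. f i \<in> I \<and> g i \<in> J}"

definition star_operation :: "('k::field) set \<Rightarrow> ('k set \<Rightarrow> 'k set) \<Rightarrow> bool" where
  "star_operation D st \<longleftrightarrow>
     (\<forall>I. frac_ideal D I \<longrightarrow> frac_ideal D (st I)) \<and>
     (\<forall>x. x \<noteq> 0 \<longrightarrow> st {d * x | d. d \<in> D} = {d * x | d. d \<in> D}) \<and>
     (\<forall>x I. x \<noteq> 0 \<longrightarrow> frac_ideal D I \<longrightarrow> st ((*) x ` I) = (*) x ` st I) \<and>
     (\<forall>I. frac_ideal D I \<longrightarrow> I \<subseteq> st I) \<and>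
     (\<forall>I J. frac_ideal D I \<longrightarrow> frac_ideal D J \<longrightarrow> I \<subseteq> J \<longrightarrow> st I \<subseteq> st J) \<and>
     (\<forall>I. frac_ideal D I \<longrightarrow> st (st I) = st I)"

definition finite_character :: "('k::field) set \<Rightarrow> ('k set \<Rightarrow> 'k set) \<Rightarrow> bool" where
  "finite_character D st \<longleftrightarrow>
     (\<forall>I. frac_ideal D I \<longrightarrow> st I = \<Union>{st J | J. fg_ideal D J \<and> J \<subseteq> I})"

definition star_ideal :: "('k::field) set \<Rightarrow> ('k set \<Rightarrow> 'k set) \<Rightarrow> 'k set \<Rightarrow> bool" where
  "star_ideal D st I \<longleftrightarrow> frac_ideal D I \<and> st I = I"

definition star_fin_type :: "('k::field) set \<Rightarrow> ('k set \<Rightarrow> 'k set) \<Rightarrow> 'k set \<Rightarrow> bool" where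
  "star_fin_type D st I \<longleftrightarrow> star_ideal D st I \<and> (\<exists>J. fg_ideal D J \<and> I = st J)"

definition max_star_ideal :: "('k::field) set \<Rightarrow> ('k set \<Rightarrow> 'k set) \<Rightarrow> 'k set \<Rightarrow> bool" where
  "max_star_ideal D st M \<longleftrightarrow> star_ideal D st M \<and> M \<subseteq> D \<and> M \<noteq> D \<and>
     (\<forall>N. star_ideal D st N \<and> N \<subseteq> D \<and> N \<noteq> D \<and> M \<subseteq> N \<longrightarrow> N = M)"

definition star_homog :: "('k::field) set \<Rightarrow> ('k set \<Rightarrow> 'k set) \<Rightarrow> 'k set \<Rightarrow> bool" where
  "star_homog D st I \<longleftrightarrow> star_fin_type D st I \<and> I \<subseteq> D \<and> I \<noteq> D \<and>
     (\<forall>J L. star_fin_type D st J \<and> J \<subseteq> D \<and> J \<noteq> D \<and> I \<subseteq> J \<and>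
            star_fin_type D st L \<and> L \<subseteq> D \<and> L \<noteq> D \<and> I \<subseteq> L
            \<longrightarrow> st (ideal_sum J L) \<noteq> D)"

definition M_of :: "('k::field) set \<Rightarrow> ('k set \<Rightarrow> 'k set) \<Rightarrow> 'k set \<Rightarrow> 'k set" where
  "M_of D st I = (THE M. max_star_ideal D st M \<and> I \<subseteq> M)"

definition localization :: "('k::field) set \<Rightarrow> 'k set \<Rightarrow> 'k set" where
  "localization D P = {a / s | a s. a \<in> D \<and> s \<in> D \<and> s \<notin> P}"

end

theory Submission
  imports Defs
begin

inductive_set fs :: "('a::field \<Rightarrow> bool) \<Rightarrow> 'a set" for P where
  fs0: "0 \<in> fs P"
| fsS: "P x \<Longrightarrow> y \<in> fs P \<Longrightarrow> x + y \<in> fs P"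

definition prods :: "'k::field set \<Rightarrow> 'k set \<Rightarrow> 'k \<Rightarrow> bool" where
  "prods A B x \<longleftrightarrow> (\<exists>a\<in>A. \<exists>b\<in>B. x = a*b)"

lemma sums_eq_fs:
  "{\<Sum>i<(n::nat). f i * g i | n f g. \<forall>i<n. f i \<in> A \<and> g i \<in> B} = fs (prods A B)"
proof
  show "{\<Sum>i<(n::nat). f i * g i | n f g. \<forall>i<n. f i \<in> A \<and> g i \<in> B} \<subseteq> fs (prods A B)"
  proof clarify
    fix n and f g :: "nat \<Rightarrow> 'a"
    show "\<forall>i<n. f i \<in> A \<and> g i \<in> B \<Longrightarrow> (\<Sum>i<n. f i * g i) \<in> fs (prods A B)"
    proof (induction n)
      case 0 then show ?case by (simp add: fs0)
    next
      case (Suc n)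
      then have "(\<Sum>i<n. f i * g i) \<in> fs (prods A B)" by simp
      moreover have "prods A B (f n * g n)" using Suc.prems by (auto simp: prods_def)
      ultimately show ?case by (simp add: add.commute fsS)
    qed
  qed
next
  show "fs (prods A B) \<subseteq> {\<Sum>i<(n::nat). f i * g i | n f g. \<forall>i<n. f i \<in> A \<and> g i \<in> B}"
  proof
    fix z assume "z \<in> fs (prods A B)"
    then show "z \<in> {\<Sum>i<(n::nat). f i * g i | n f g. \<forall>i<n. f i \<in> A \<and> g i \<in> B}"
    proof induction
      case fs0
      show ?case by (rule CollectI, rule exI[of _ 0]) auto
    next
      case (fsS x y)
      then obtain m f g where y: "y = (\<Sum>i<(m::nat). f i * g i)" "\<forall>i<m. f i \<in> A \<and> g i \<in> B" by blast
      from fsS(1) obtain a b where ab: "a \<in> A" "b \<in> B" "x = a*b" by (auto simp: prods_def)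
      have "(\<Sum>i<Suc m. (f(m:=a)) i * (g(m:=b)) i) = (\<Sum>i<m. f i * g i) + a * b"
      proof -
        have "(\<Sum>i<m. (f(m:=a)) i * (g(m:=b)) i) = (\<Sum>i<m. f i * g i)" by (rule sum.cong) auto
        then show ?thesis unfolding sum.lessThan_Suc by simp
      qed
      moreover have "\<forall>i<Suc m. (f(m:=a)) i \<in> A \<and> (g(m:=b)) i \<in> B" using y(2) ab by auto
      ultimately have "x + y = (\<Sum>i<Suc m. (f(m:=a)) i * (g(m:=b)) i) \<and> (\<forall>i<Suc m. (f(m:=a)) i \<in> A \<and> (g(m:=b)) i \<in> B)"
        using y ab by (simp add: add.commute)
      then show ?case by blast
    qed
  qed
qed

lemma fs_add: "x \<in> fs P \<Longrightarrow> y \<in> fs P \<Longrightarrow> x + y \<in> fs P"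
  by (induction x rule: fs.induct) (auto simp: add.assoc intro: fs.intros)

lemma fs_sub: assumes "0 \<in> T" "\<And>x y. P x \<Longrightarrow> y \<in> T \<Longrightarrow> x + y \<in> T" shows "fs P \<subseteq> T"
proof
  fix z assume "z \<in> fs P" then show "z \<in> T" by induction (auto intro: assms)
qed

lemma fs_single: "P x \<Longrightarrow> x \<in> fs P" using fsS[OF _ fs0] by force

lemma fs_mult: assumes "\<And>x. P x \<Longrightarrow> P (d*x)" "x \<in> fs P" shows "d * x \<in> fs P"
  using assms(2) by (induction x rule: fs.induct) (auto simp: distrib_left intro: fs.intros assms(1))

locale SD =
  fixes D :: "'k::field set" and st :: "'k set \<Rightarrow> 'k set"
  assumes dom: "domain_with_qf D" and so: "star_operation D st" and fc: "finite_character D st"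
begin

lemma sr: "subring D" using dom domain_with_qf_def by blast
lemma D0: "0 \<in> D" using sr subring_def by blast
lemma D1: "1 \<in> D" using sr subring_def by blast
lemma Dadd: "x \<in> D \<Longrightarrow> y \<in> D \<Longrightarrow> x + y \<in> D" using sr subring_def by blast
lemma Dmul: "x \<in> D \<Longrightarrow> y \<in> D \<Longrightarrow> x * y \<in> D" using sr subring_def by blast

lemma dgen_fs: "dgen D S = fs (prods D S)" unfolding dgen_def by (rule sums_eq_fs)
lemma iprod_fs: "ideal_prod A B = fs (prods A B)" unfolding ideal_prod_def by (rule sums_eq_fs)

lemma dgen_incl: "S \<subseteq> dgen D S"
  unfolding dgen_fs using D1 by (auto intro!: fs_single simp: prods_def) (metis mult_1)

lemma dmodD: assumes "dmod D N" shows "0 \<in> N" "x \<in> N \<Longrightarrow> y \<in> N \<Longrightarrow> x + y \<in> N"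
   "d \<in> D \<Longrightarrow> x \<in> N \<Longrightarrow> d * x \<in> N"
  using assms unfolding dmod_def by blast+

lemma dgen_sub: assumes "dmod D N" "S \<subseteq> N" shows "dgen D S \<subseteq> N"
  unfolding dgen_fs by (rule fs_sub) (use assms dmodD[OF assms(1)] in \<open>auto simp: prods_def\<close>)

lemma dgen_mono: assumes "S \<subseteq> S'" shows "dgen D S \<subseteq> dgen D S'"
  unfolding dgen_fs
proof (rule fs_sub)
  show "0 \<in> fs (prods D S')" by (rule fs0)
  fix x y assume "prods D S x" "y \<in> fs (prods D S')"
  moreover from this(1) have "prods D S' x" using assms unfolding prods_def by blast
  ultimately show "x + y \<in> fs (prods D S')" by (intro fsS)
qed

lemma dmod_dgen: "dmod D (dgen D S)"
  unfolding dmod_def dgen_fs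
proof (intro conjI ballI)
  show "0 \<in> fs (prods D S)" by (rule fs0)
  show "x + y \<in> fs (prods D S)" if "x \<in> fs (prods D S)" "y \<in> fs (prods D S)" for x y
    using that by (rule fs_add)
  show "d * x \<in> fs (prods D S)" if "d \<in> D" "x \<in> fs (prods D S)" for d x
  proof (rule fs_mult[OF _ that(2)])
    fix z assume "prods D S z"
    then obtain c t where "c \<in> D" "t \<in> S" "z = c * t" by (auto simp: prods_def)
    then show "prods D S (d * z)" unfolding prods_def using that(1) Dmul
      by (metis mult.assoc)
  qed
qed

lemma dmod_iprod: assumes "dmod D A" shows "dmod D (ideal_prod A B)"
  unfolding dmod_def iprod_fs
proof (intro conjI ballI)
  show "0 \<in> fs (prods A B)" by (rule fs0)
  show "x + y \<in> fs (prods A B)" if "x \<in> fs (prods A B)" "y \<in> fs (prods A B)" for x y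
    using that by (rule fs_add)
  show "d * x \<in> fs (prods A B)" if "d \<in> D" "x \<in> fs (prods A B)" for d x
  proof (rule fs_mult[OF _ that(2)])
    fix z assume "prods A B z"
    then obtain c t where "c \<in> A" "t \<in> B" "z = c * t" by (auto simp: prods_def)
    then show "prods A B (d * z)" unfolding prods_def using that(1) dmodD(3)[OF assms]
      by (metis mult.assoc)
  qed
qed

lemma dmod_D: "dmod D D" unfolding dmod_def using D0 Dadd Dmul by blast

lemma frac_sub: assumes "dmod D I" "I \<subseteq> D" "I \<noteq> {0}" shows "frac_ideal D I"
proof -
  have "\<forall>x\<in>I. 1 * x \<in> D" using assms(2) by auto
  moreover have "(1::'k) \<noteq> 0" by simp
  ultimately show ?thesis unfolding frac_ideal_def using D1 assms(1,3) by blast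
qed

lemma frac_dmod: "frac_ideal D I \<Longrightarrow> dmod D I" unfolding frac_ideal_def by blast

lemma frac_nz: "frac_ideal D I \<Longrightarrow> \<exists>x\<in>I. x \<noteq> 0"
  unfolding frac_ideal_def dmod_def by blast

lemma frac_D: "frac_ideal D D"
proof -
  have "D \<noteq> {0}" using D1 by (metis one_neq_zero singletonD)
  then show ?thesis using frac_sub[OF dmod_D] by simp
qed

lemma SO1: "\<forall>I. frac_ideal D I \<longrightarrow> frac_ideal D (st I)"
  using so unfolding star_operation_def by (elim conjE) assumption
lemma SO2: "\<forall>x. x \<noteq> 0 \<longrightarrow> st {d * x | d. d \<in> D} = {d * x | d. d \<in> D}"
  using so unfolding star_operation_def by (elim conjE) assumption
lemma SO3: "\<forall>x I. x \<noteq> 0 \<longrightarrow> frac_ideal D I \<longrightarrow> st ((*) x ` I) = (*) x ` st I"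
  using so unfolding star_operation_def by (elim conjE) assumption
lemma SO4: "\<forall>I. frac_ideal D I \<longrightarrow> I \<subseteq> st I"
  using so unfolding star_operation_def by (elim conjE) assumption
lemma SO5: "\<forall>I J. frac_ideal D I \<longrightarrow> frac_ideal D J \<longrightarrow> I \<subseteq> J \<longrightarrow> st I \<subseteq> st J"
  using so unfolding star_operation_def by (elim conjE) assumption
lemma SO6: "\<forall>I. frac_ideal D I \<longrightarrow> st (st I) = st I"
  using so unfolding star_operation_def by (elim conjE) assumption
lemmas SOs = SO1 SO2 SO3 SO4 SO5 SO6

lemma st_frac: "frac_ideal D I \<Longrightarrow> frac_ideal D (st I)" using SOs(1) by blast
lemma st_mult: "x \<noteq> 0 \<Longrightarrow> frac_ideal D I \<Longrightarrow> st ((*) x ` I) = (*) x ` st I"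
  using SOs(3) by blast
lemma st_ext: "frac_ideal D I \<Longrightarrow> I \<subseteq> st I" using SOs(4) by blast
lemma st_mono: "frac_ideal D I \<Longrightarrow> frac_ideal D J \<Longrightarrow> I \<subseteq> J \<Longrightarrow> st I \<subseteq> st J"
  using SOs(5) by blast
lemma st_idem: "frac_ideal D I \<Longrightarrow> st (st I) = st I" using SOs(6) by blast

lemma st_D: "st D = D"
proof -
  have "st {d * 1 | d. d \<in> D} = {d * 1 | d. d \<in> D}" using SOs(2)[rule_format, of 1] by simp
  moreover have "{d * 1 | d. d \<in> D} = D" by auto
  ultimately show ?thesis by simp
qed

lemma st_subD: "frac_ideal D L \<Longrightarrow> L \<subseteq> D \<Longrightarrow> st L \<subseteq> D"
  using st_mono[OF _ frac_D] st_D by blast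

lemma st_eqD: assumes "frac_ideal D L" "L \<subseteq> D" "1 \<in> st L" shows "st L = D"
proof
  show "st L \<subseteq> D" using st_subD assms by blast
  show "D \<subseteq> st L" using dmodD(3)[OF frac_dmod[OF st_frac[OF assms(1)]] _ assms(3)] by force
qed

lemma frac_scale: assumes "frac_ideal D X" "b \<in> D" "b \<noteq> 0" shows "frac_ideal D ((*) b ` X)"
proof -
  have dm: "dmod D X" using assms frac_dmod by blast
  have "dmod D ((*) b ` X)" unfolding dmod_def
  proof (intro conjI ballI)
    show "0 \<in> (*) b ` X" using dmodD(1)[OF dm] by force
    fix x y assume "x \<in> (*) b ` X" "y \<in> (*) b ` X"
    then show "x + y \<in> (*) b ` X" using dmodD(2)[OF dm] by (auto simp: distrib_left[symmetric])
  next
    fix d x assume "d \<in> D" "x \<in> (*) b ` X"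
    then show "d * x \<in> (*) b ` X" using dmodD(3)[OF dm] by (auto simp: mult.left_commute)
  qed
  moreover obtain x where "x \<in> X" "x \<noteq> 0" using frac_nz[OF assms(1)] by blast
  then have "b * x \<in> (*) b ` X" "b * x \<noteq> 0" using assms(3) by auto
  then have "(*) b ` X \<noteq> {0}" by blast
  moreover obtain d where "d \<in> D" "d \<noteq> 0" "\<forall>x\<in>X. d * x \<in> D" using assms(1) frac_ideal_def by blast
  then have "\<forall>y\<in>(*) b ` X. d * y \<in> D" using assms(2) Dmul by (auto simp: mult.left_commute)
  ultimately show ?thesis unfolding frac_ideal_def using \<open>d \<in> D\<close> \<open>d \<noteq> 0\<close> by blast
qed

lemma key:
  assumes "frac_ideal D X" "st X = D" "b \<in> D" "\<And>x. x \<in> X \<Longrightarrow> b * x \<in> I" "star_ideal D st I"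
  shows "b \<in> I"
proof (cases "b = 0")
  case True
  have "dmod D I" using assms(5) frac_dmod star_ideal_def by blast
  then show ?thesis using True dmodD(1) by simp
next
  case False
  have fI: "frac_ideal D I" "st I = I" using assms(5) star_ideal_def by blast+
  have "st ((*) b ` X) \<subseteq> st I" using st_mono[OF frac_scale[OF assms(1,3) False] fI(1)] assms(4) by blast
  moreover have "st ((*) b ` X) = (*) b ` D" using st_mult[OF False assms(1)] assms(2) by simp
  ultimately show ?thesis using fI(2) D1 by force
qed

lemma fc_lemma: assumes "frac_ideal D X" "1 \<in> st X"
  shows "\<exists>S. finite S \<and> S \<subseteq> X \<and> fg_ideal D (dgen D S) \<and> 1 \<in> st (dgen D S)"
proof -
  have "st X = \<Union>{st J | J. fg_ideal D J \<and> J \<subseteq> X}" using fc assms(1) unfolding finite_character_def by blast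
  then obtain J where J: "fg_ideal D J" "J \<subseteq> X" "1 \<in> st J" using assms(2) by blast
  then obtain S where "finite S" "J = dgen D S" unfolding fg_ideal_def by blast
  then show ?thesis using J dgen_incl by blast
qed

lemma dmod_pre: assumes "dmod D I" "b \<in> D" shows "dmod D {x. b * x \<in> I}" "I \<subseteq> {x. b * x \<in> I}"
proof -
  show "dmod D {x. b * x \<in> I}" unfolding dmod_def
  proof (intro conjI ballI)
    show "0 \<in> {x. b * x \<in> I}" using dmodD(1)[OF assms(1)] by simp
    fix x y assume "x \<in> {x. b * x \<in> I}" "y \<in> {x. b * x \<in> I}"
    then show "x + y \<in> {x. b * x \<in> I}" using dmodD(2)[OF assms(1)] by (simp add: distrib_left)
  next
    fix d x assume "d \<in> D" "x \<in> {x. b * x \<in> I}"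
    then have "d * (b * x) \<in> I" using dmodD(3)[OF assms(1)] by simp
    then show "d * x \<in> {x. b * x \<in> I}" by (simp add: mult.left_commute)
  qed
  show "I \<subseteq> {x. b * x \<in> I}" using dmodD(3)[OF assms(1) assms(2)] by blast
qed

lemma dmod_sum: assumes "dmod D A" "dmod D B" shows "dmod D (ideal_sum A B)"
  unfolding dmod_def
proof (intro conjI ballI)
  show "0 \<in> ideal_sum A B" unfolding ideal_sum_def using dmodD(1)[OF assms(1)] dmodD(1)[OF assms(2)] by force
  fix x y assume "x \<in> ideal_sum A B" "y \<in> ideal_sum A B"
  then obtain a1 b1 a2 b2 where "x = a1 + b1" "y = a2 + b2" "a1 \<in> A" "a2 \<in> A" "b1 \<in> B" "b2 \<in> B"
    unfolding ideal_sum_def by blast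
  moreover have "x + y = (a1 + a2) + (b1 + b2)" using calculation by (simp add: algebra_simps)
  ultimately show "x + y \<in> ideal_sum A B" unfolding ideal_sum_def
    using dmodD(2)[OF assms(1)] dmodD(2)[OF assms(2)] by blast
next
  fix d x assume "d \<in> D" "x \<in> ideal_sum A B"
  then obtain a1 b1 where "x = a1 + b1" "a1 \<in> A" "b1 \<in> B" unfolding ideal_sum_def by blast
  moreover have "d * x = d * a1 + d * b1" using calculation by (simp add: algebra_simps)
  ultimately show "d * x \<in> ideal_sum A B" unfolding ideal_sum_def
    using dmodD(3)[OF assms(1) \<open>d \<in> D\<close>] dmodD(3)[OF assms(2) \<open>d \<in> D\<close>] by blast
qed

lemma sum_left: assumes "dmod D B" shows "A \<subseteq> ideal_sum A B"
proof
  fix x assume "x \<in> A" then have "x = x + 0" "0 \<in> B" using dmodD(1)[OF assms] by auto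
  then show "x \<in> ideal_sum A B" unfolding ideal_sum_def using \<open>x \<in> A\<close> by blast
qed
lemma sum_right: assumes "dmod D A" shows "B \<subseteq> ideal_sum A B"
proof
  fix x assume "x \<in> B" then have "x = 0 + x" "0 \<in> A" using dmodD(1)[OF assms] by auto
  then show "x \<in> ideal_sum A B" unfolding ideal_sum_def using \<open>x \<in> B\<close> by blast
qed
lemma sum_subD: "A \<subseteq> D \<Longrightarrow> B \<subseteq> D \<Longrightarrow> ideal_sum A B \<subseteq> D" unfolding ideal_sum_def using Dadd by blast

lemma frac_sum: assumes "frac_ideal D A" "dmod D B" "A \<subseteq> D" "B \<subseteq> D" shows "frac_ideal D (ideal_sum A B)"
proof (rule frac_sub)
  obtain x where "x \<in> A" "x \<noteq> 0" using frac_nz[OF assms(1)] by blast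
  then show "ideal_sum A B \<noteq> {0}" using sum_left[OF assms(2), of A] by blast
  show "dmod D (ideal_sum A B)" using dmod_sum[OF frac_dmod[OF assms(1)] assms(2)] .
  show "ideal_sum A B \<subseteq> D" using sum_subD assms(3,4) .
qed

end

context SD begin

lemma sft_parts: assumes "star_fin_type D st I"
  shows "frac_ideal D I" "st I = I" "dmod D I" "\<exists>x\<in>I. x \<noteq> 0"
proof -
  show f: "frac_ideal D I" "st I = I" using assms unfolding star_fin_type_def star_ideal_def by blast+
  show "dmod D I" by (rule frac_dmod[OF f(1)])
  show "\<exists>x\<in>I. x \<noteq> 0" by (rule frac_nz[OF f(1)])
qed

lemma cons:
  assumes I: "star_fin_type D st I" "I \<subseteq> D" and T: "finite T" "T \<subseteq> D"
  shows "\<exists>J'. fg_ideal D J' \<and> J' \<subseteq> D \<and> T \<subseteq> J' \<and> I \<subseteq> st J' \<and> star_fin_type D st (st J') \<and> st J' \<subseteq> D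
     \<and> (\<forall>N. dmod D N \<and> I \<subseteq> N \<and> T \<subseteq> N \<longrightarrow> J' \<subseteq> N)"
proof -
  obtain J0 where J0: "fg_ideal D J0" "I = st J0" using I(1) unfolding star_fin_type_def by blast
  then obtain S0 where S0: "finite S0" "J0 = dgen D S0" unfolding fg_ideal_def by blast
  have fJ0: "frac_ideal D J0" using J0(1) unfolding fg_ideal_def by blast
  have "S0 \<subseteq> J0" using dgen_incl[of S0] S0(2) by simp
  also have "J0 \<subseteq> I" using st_ext[OF fJ0] J0(2) by simp
  finally have S0I: "S0 \<subseteq> I" .
  define J' where "J' = dgen D (S0 \<union> T)"
  have "S0 \<union> T \<subseteq> D" using S0I I(2) T(2) by blast
  then have J'D: "J' \<subseteq> D" unfolding J'_def by (rule dgen_sub[OF dmod_D])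
  have J0J': "J0 \<subseteq> J'" unfolding J'_def S0(2) by (rule dgen_mono) blast
  have "J' \<noteq> {0}" using frac_nz[OF fJ0] J0J' by blast
  then have fJ': "frac_ideal D J'" using frac_sub[OF dmod_dgen[of "S0 \<union> T"]] J'D unfolding J'_def by simp
  have "finite (S0 \<union> T)" using S0(1) T(1) by simp
  then have fgJ': "fg_ideal D J'" unfolding fg_ideal_def using fJ' J'_def by blast
  have TJ': "T \<subseteq> J'" unfolding J'_def using dgen_incl[of "S0 \<union> T"] by blast
  have IJ: "I \<subseteq> st J'" using st_mono[OF fJ0 fJ' J0J'] J0(2) by simp
  have "star_ideal D st (st J')" unfolding star_ideal_def using st_frac[OF fJ'] st_idem[OF fJ'] by simp
  then have sft: "star_fin_type D st (st J')" unfolding star_fin_type_def using fgJ' by blast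
  have JD: "st J' \<subseteq> D" using st_subD[OF fJ' J'D] .
  have "\<forall>N. dmod D N \<and> I \<subseteq> N \<and> T \<subseteq> N \<longrightarrow> J' \<subseteq> N"
  proof (intro allI impI)
    fix N assume N: "dmod D N \<and> I \<subseteq> N \<and> T \<subseteq> N"
    then have "S0 \<union> T \<subseteq> N" using S0I by blast
    then show "J' \<subseteq> N" unfolding J'_def using dgen_sub N by blast
  qed
  then show ?thesis using fgJ' J'D TJ' IJ sft JD by blast
qed

lemma part1:
  assumes A: "dmod D A" "A \<subseteq> D" "A \<noteq> {0}" and B: "dmod D B" "B \<subseteq> D" "B \<noteq> {0}"
  and AB: "st (ideal_sum A B) = D" and H: "star_homog D st I" and P: "ideal_prod A B \<subseteq> I"
  shows "A \<subseteq> I \<or> B \<subseteq> I"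
proof -
  note Hd = H[unfolded star_homog_def]
  note Isft = Hd[THEN conjunct1] Hd[THEN conjunct2, THEN conjunct1]
  note Hc = Hd[THEN conjunct2, THEN conjunct2, THEN conjunct2]
  have dI: "dmod D I" using sft_parts(3)[OF Isft(1)] .
  have sI: "star_ideal D st I" using Isft(1) unfolding star_fin_type_def by blast
  obtain a where "a \<in> A" "a \<noteq> 0" using A(3) dmodD(1)[OF A(1)] by auto
  then have "ideal_sum A B \<noteq> {0}" using sum_left[OF B(1), of A] by blast
  then have fS: "frac_ideal D (ideal_sum A B)" using frac_sub[OF dmod_sum[OF A(1) B(1)] sum_subD[OF A(2) B(2)]] by blast
  obtain S where S: "finite S" "S \<subseteq> ideal_sum A B" "fg_ideal D (dgen D S)" "1 \<in> st (dgen D S)"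
  proof -
    have "1 \<in> st (ideal_sum A B)" using AB D1 by simp
    then show ?thesis using fc_lemma[OF fS] that by blast
  qed
  have "\<forall>t\<in>S. \<exists>p. fst p \<in> A \<and> snd p \<in> B \<and> t = fst p + snd p"
  proof
    fix t assume "t \<in> S"
    then obtain x y where "x \<in> A" "y \<in> B" "t = x + y" using S(2) unfolding ideal_sum_def by blast
    then show "\<exists>p. fst p \<in> A \<and> snd p \<in> B \<and> t = fst p + snd p" by (intro exI[of _ "(x,y)"]) simp
  qed
  from bchoice[OF this] obtain g where g: "\<forall>t\<in>S. fst (g t) \<in> A \<and> snd (g t) \<in> B \<and> t = fst (g t) + snd (g t)"
    by blast
  define TA where "TA = (fst \<circ> g) ` S"
  define TB where "TB = (snd \<circ> g) ` S"
  have gA: "\<And>t. t \<in> S \<Longrightarrow> fst (g t) \<in> A" and gB: "\<And>t. t \<in> S \<Longrightarrow> snd (g t) \<in> B"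
    and geq: "\<And>t. t \<in> S \<Longrightarrow> t = fst (g t) + snd (g t)" using g by blast+
  have TA: "finite TA" "TA \<subseteq> A" using S(1) gA unfolding TA_def by auto
  have TB: "finite TB" "TB \<subseteq> B" using S(1) gB unfolding TB_def by auto
  obtain J' where J': "fg_ideal D J'" "J' \<subseteq> D" "TA \<subseteq> J'" "I \<subseteq> st J'" "star_fin_type D st (st J')" "st J' \<subseteq> D"
     "\<forall>N. dmod D N \<and> I \<subseteq> N \<and> TA \<subseteq> N \<longrightarrow> J' \<subseteq> N"
    using cons[OF Isft TA(1)] TA(2) A(2) by (metis order_trans)
  obtain L' where L': "fg_ideal D L'" "L' \<subseteq> D" "TB \<subseteq> L'" "I \<subseteq> st L'" "star_fin_type D st (st L')" "st L' \<subseteq> D"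
     "\<forall>N. dmod D N \<and> I \<subseteq> N \<and> TB \<subseteq> N \<longrightarrow> L' \<subseteq> N"
    using cons[OF Isft TB(1)] TB(2) B(2) by (metis order_trans)
  have fJ': "frac_ideal D J'" "frac_ideal D L'" using J'(1) L'(1) unfolding fg_ideal_def by blast+
  define JL where "JL = ideal_sum (st J') (st L')"
  have dJL: "dmod D JL" unfolding JL_def using dmod_sum[OF sft_parts(3)[OF J'(5)] sft_parts(3)[OF L'(5)]] .
  have fJL: "frac_ideal D JL" unfolding JL_def
    using frac_sum[OF sft_parts(1)[OF J'(5)] sft_parts(3)[OF L'(5)] J'(6) L'(6)] .
  have "S \<subseteq> JL"
  proof
    fix t assume t: "t \<in> S"
    then have "fst (g t) \<in> TA" "snd (g t) \<in> TB" unfolding TA_def TB_def by auto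
    then have "fst (g t) \<in> st J'" "snd (g t) \<in> st L'" using J'(3) L'(3) st_ext[OF fJ'(1)] st_ext[OF fJ'(2)]
      by blast+
    then show "t \<in> JL" unfolding JL_def ideal_sum_def using geq[OF t] by blast
  qed
  then have "dgen D S \<subseteq> JL" using dgen_sub dJL by blast
  then have "1 \<in> st JL" using st_mono[OF _ fJL] S(3,4) unfolding fg_ideal_def by blast
  then have "st JL = D" using st_eqD[OF fJL] sum_subD J'(6) L'(6) unfolding JL_def by blast
  then have "st J' = D \<or> st L' = D" using Hc[rule_format, of "st J'" "st L'"] J'(4,5,6) L'(4,5,6) unfolding JL_def by blast
  then show ?thesis
  proof
    assume eq: "st J' = D"
    have "B \<subseteq> I"
    proof
      fix b assume b: "b \<in> B"
      then have bD: "b \<in> D" using B(2) by blast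
      have "TA \<subseteq> {x. b * x \<in> I}"
      proof
        fix x assume "x \<in> TA"
        then have "x \<in> A" using TA by blast
        then have "prods A B (b * x)" unfolding prods_def using b by (metis mult.commute)
        then show "x \<in> {x. b * x \<in> I}" using P fs_single iprod_fs by blast
      qed
      then have "J' \<subseteq> {x. b * x \<in> I}" using J'(7) dmod_pre[OF dI bD] by blast
      then show "b \<in> I" using key[OF fJ'(1) eq bD _ sI] by blast
    qed
    then show ?thesis by blast
  next
    assume eq: "st L' = D"
    have "A \<subseteq> I"
    proof
      fix b assume b: "b \<in> A"
      then have bD: "b \<in> D" using A(2) by blast
      have "TB \<subseteq> {x. b * x \<in> I}"
      proof
        fix x assume "x \<in> TB"
        then have "x \<in> B" using TB by blast
        then have "prods A B (b * x)" unfolding prods_def using b by blast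
        then show "x \<in> {x. b * x \<in> I}" using P fs_single iprod_fs by blast
      qed
      then have "L' \<subseteq> {x. b * x \<in> I}" using L'(7) dmod_pre[OF dI bD] by blast
      then show "b \<in> I" using key[OF fJ'(2) eq bD _ sI] by blast
    qed
    then show ?thesis by blast
  qed
qed

end

context SD begin

lemma one_notin: assumes "dmod D N" "N \<subseteq> D" "N \<noteq> D" shows "1 \<notin> N"
proof
  assume "1 \<in> N"
  then have "D \<subseteq> N" using dmodD(3)[OF assms(1)] by force
  then show False using assms(2,3) by blast
qed

lemma max_parts: assumes "max_star_ideal D st M"
  shows "frac_ideal D M" "st M = M" "dmod D M" "M \<subseteq> D" "M \<noteq> D" "1 \<notin> M" "0 \<in> M"
    "star_ideal D st M"
proof -
  show sM: "star_ideal D st M" using assms unfolding max_star_ideal_def by blast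
  show f: "frac_ideal D M" "st M = M" using sM unfolding star_ideal_def by blast+
  show d: "dmod D M" using frac_dmod[OF f(1)] .
  show s: "M \<subseteq> D" "M \<noteq> D" using assms unfolding max_star_ideal_def by blast+
  show "1 \<notin> M" using one_notin[OF d s] .
  show "0 \<in> M" using dmodD(1)[OF d] .
qed

lemma max_maximal: assumes "max_star_ideal D st M" "star_ideal D st N" "N \<subseteq> D" "M \<subseteq> N" "N \<noteq> M"
  shows "N = D"
  using assms unfolding max_star_ideal_def by blast

lemma dmod_Ds: "dmod D {d * s | d. d \<in> D}" "{d * s | d. d \<in> D} \<subseteq> D \<or> s \<notin> D" "s \<in> {d * s | d. d \<in> D}"
proof -
  show "dmod D {d * s | d. d \<in> D}" unfolding dmod_def
  proof (intro conjI ballI)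
    show "0 \<in> {d * s | d. d \<in> D}" using D0 by force
    fix x y assume "x \<in> {d * s | d. d \<in> D}" "y \<in> {d * s | d. d \<in> D}"
    then obtain a b where "a \<in> D" "b \<in> D" "x = a * s" "y = b * s" by blast
    moreover then have "x + y = (a + b) * s" by (simp add: distrib_right)
    ultimately show "x + y \<in> {d * s | d. d \<in> D}" using Dadd by blast
  next
    fix c x assume "c \<in> D" "x \<in> {d * s | d. d \<in> D}"
    then obtain a where "a \<in> D" "x = a * s" by blast
    moreover then have "c * x = (c * a) * s" by (simp add: mult.assoc)
    ultimately show "c * x \<in> {d * s | d. d \<in> D}" using Dmul \<open>c \<in> D\<close> by blast
  qed
  show "{d * s | d. d \<in> D} \<subseteq> D \<or> s \<notin> D" using Dmul by blast
  show "s \<in> {d * s | d. d \<in> D}" using D1 by force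
qed

lemma esc: assumes M: "max_star_ideal D st M" and s: "s \<in> D" "s \<notin> M"
  shows "st (ideal_sum M {d * s | d. d \<in> D}) = D" "frac_ideal D (ideal_sum M {d * s | d. d \<in> D})"
    "ideal_sum M {d * s | d. d \<in> D} \<subseteq> D"
proof -
  define N0 where "N0 = ideal_sum M {d * s | d. d \<in> D}"
  have DsD: "{d * s | d. d \<in> D} \<subseteq> D" using dmod_Ds(2) s(1) by blast
  have fN0: "frac_ideal D N0" unfolding N0_def
    using frac_sum[OF max_parts(1)[OF M] dmod_Ds(1) max_parts(4)[OF M] DsD] .
  have N0D: "N0 \<subseteq> D" unfolding N0_def using sum_subD[OF max_parts(4)[OF M] DsD] .
  have sX: "star_ideal D st (st N0)" unfolding star_ideal_def using st_frac[OF fN0] st_idem[OF fN0] by simp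
  have XD: "st N0 \<subseteq> D" using st_subD[OF fN0 N0D] .
  have "M \<subseteq> N0" unfolding N0_def using sum_left[OF dmod_Ds(1)] .
  then have MX: "M \<subseteq> st N0" using st_ext[OF fN0] by blast
  have "s \<in> N0" unfolding N0_def using sum_right[OF max_parts(3)[OF M]] dmod_Ds(3) by blast
  then have "s \<in> st N0" using st_ext[OF fN0] by blast
  then have "st N0 \<noteq> M" using s(2) by blast
  then show "st (ideal_sum M {d * s | d. d \<in> D}) = D" using max_maximal[OF M sX XD MX] unfolding N0_def by blast
  show "frac_ideal D (ideal_sum M {d * s | d. d \<in> D})" using fN0 unfolding N0_def .
  show "ideal_sum M {d * s | d. d \<in> D} \<subseteq> D" using N0D unfolding N0_def .
qed

lemma prime: assumes M: "max_star_ideal D st M" and x: "x \<in> D" "x \<notin> M" and y: "y \<in> D" and xy: "x * y \<in> M"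
  shows "y \<in> M"
proof (rule key[OF esc(2)[OF M x] esc(1)[OF M x] y _ max_parts(8)[OF M]])
  fix z assume "z \<in> ideal_sum M {d * x | d. d \<in> D}"
  then obtain m d where "m \<in> M" "d \<in> D" "z = m + d * x" unfolding ideal_sum_def by blast
  moreover then have "y * z = y * m + d * (x * y)" by (simp add: algebra_simps)
  ultimately show "y * z \<in> M" using dmodD[OF max_parts(3)[OF M]] xy y by simp
qed

end

context SD begin

lemma consE:
  assumes "star_fin_type D st I" "I \<subseteq> D" "finite T" "T \<subseteq> D"
  obtains J' where "fg_ideal D J'" "J' \<subseteq> D" "T \<subseteq> J'" "I \<subseteq> st J'" "star_fin_type D st (st J')" "st J' \<subseteq> D"
     "\<forall>N. dmod D N \<and> I \<subseteq> N \<and> T \<subseteq> N \<longrightarrow> J' \<subseteq> N"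
  using cons[OF assms] apply (elim exE conjE) apply (rule that) apply assumption+ done

lemma sep:
  assumes M: "max_star_ideal D st M" and B: "star_fin_type D st B" "B \<subseteq> M" and s: "s \<in> D" "s \<notin> M"
  shows "\<exists>J. star_fin_type D st J \<and> J \<subseteq> D \<and> J \<noteq> D \<and> B \<subseteq> J \<and>
     (\<forall>L. frac_ideal D L \<and> L \<subseteq> D \<and> J \<subseteq> L \<and> s \<in> L \<longrightarrow> st L = D)"
proof -
  note Mp = max_parts[OF M]
  have BD: "B \<subseteq> D" using B(2) Mp(4) by blast
  have "1 \<in> st (ideal_sum M {d * s | d. d \<in> D})" using esc(1)[OF M s] D1 by simp
  then obtain S where S: "finite S" "S \<subseteq> ideal_sum M {d * s | d. d \<in> D}" "fg_ideal D (dgen D S)" "1 \<in> st (dgen D S)"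
    using fc_lemma[OF esc(2)[OF M s]] by blast
  have "\<forall>t\<in>S. \<exists>p. fst p \<in> M \<and> snd p \<in> D \<and> t = fst p + snd p * s"
  proof
    fix t assume "t \<in> S"
    then obtain x d where "x \<in> M" "d \<in> D" "t = x + d * s" using S(2) unfolding ideal_sum_def by blast
    then show "\<exists>p. fst p \<in> M \<and> snd p \<in> D \<and> t = fst p + snd p * s" by (intro exI[of _ "(x,d)"]) simp
  qed
  from bchoice[OF this] obtain g where g: "\<forall>t\<in>S. fst (g t) \<in> M \<and> snd (g t) \<in> D \<and> t = fst (g t) + snd (g t) * s"
    by blast
  have gM: "\<And>t. t \<in> S \<Longrightarrow> fst (g t) \<in> M" and gD: "\<And>t. t \<in> S \<Longrightarrow> snd (g t) \<in> D"
    and geq: "\<And>t. t \<in> S \<Longrightarrow> t = fst (g t) + snd (g t) * s" using g by blast+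
  define T where "T = (fst \<circ> g) ` S"
  have T: "finite T" "T \<subseteq> M" using S(1) gM unfolding T_def by auto
  have TD: "T \<subseteq> D" using T(2) Mp(4) by blast
  obtain J' where J': "fg_ideal D J'" "J' \<subseteq> D" "T \<subseteq> J'" "B \<subseteq> st J'" "star_fin_type D st (st J')" "st J' \<subseteq> D"
     "\<forall>N. dmod D N \<and> B \<subseteq> N \<and> T \<subseteq> N \<longrightarrow> J' \<subseteq> N"
    by (rule consE[OF B(1) BD T(1) TD])
  have fJ': "frac_ideal D J'" using J'(1) unfolding fg_ideal_def by blast
  have "J' \<subseteq> M" using J'(7) Mp(3) B(2) T(2) by blast
  then have JM: "st J' \<subseteq> M" using st_mono[OF fJ' Mp(1)] Mp(2) by blast
  then have JnD: "st J' \<noteq> D" using Mp(4,5) by blast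
  have "\<forall>L. frac_ideal D L \<and> L \<subseteq> D \<and> st J' \<subseteq> L \<and> s \<in> L \<longrightarrow> st L = D"
  proof (intro allI impI)
    fix L assume L: "frac_ideal D L \<and> L \<subseteq> D \<and> st J' \<subseteq> L \<and> s \<in> L"
    have dL: "dmod D L" using frac_dmod L by blast
    have "S \<subseteq> L"
    proof
      fix t assume t: "t \<in> S"
      then have "fst (g t) \<in> T" unfolding T_def by auto
      then have "fst (g t) \<in> L" using J'(3) st_ext[OF fJ'] L by blast
      moreover have "snd (g t) * s \<in> L" using dmodD(3)[OF dL gD[OF t]] L by blast
      ultimately have "fst (g t) + snd (g t) * s \<in> L" using dmodD(2)[OF dL] by blast
      then show "t \<in> L" using geq[OF t] by metis
    qed
    then have "dgen D S \<subseteq> L" using dgen_sub[OF dL] by blast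
    moreover have "frac_ideal D (dgen D S)" using S(3) unfolding fg_ideal_def by blast
    ultimately have "st (dgen D S) \<subseteq> st L" using st_mono L by blast
    then have "1 \<in> st L" using S(4) by blast
    then show "st L = D" using st_eqD L by blast
  qed
  then show ?thesis using J'(4,5,6) JnD by blast
qed

lemma sepE:
  assumes "max_star_ideal D st M" "star_fin_type D st B" "B \<subseteq> M" "s \<in> D" "s \<notin> M"
  obtains J where "star_fin_type D st J" "J \<subseteq> D" "J \<noteq> D" "B \<subseteq> J"
     "\<forall>L. frac_ideal D L \<and> L \<subseteq> D \<and> J \<subseteq> L \<and> s \<in> L \<longrightarrow> st L = D"
  using sep[OF assms] apply (elim exE conjE) apply (rule that) apply assumption+ done

lemma homog_parts: assumes "star_homog D st B"
  shows "star_fin_type D st B" "B \<subseteq> D" "B \<noteq> D"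
   "\<And>J L. star_fin_type D st J \<Longrightarrow> J \<subseteq> D \<Longrightarrow> J \<noteq> D \<Longrightarrow> B \<subseteq> J \<Longrightarrow>
            star_fin_type D st L \<Longrightarrow> L \<subseteq> D \<Longrightarrow> L \<noteq> D \<Longrightarrow> B \<subseteq> L
            \<Longrightarrow> st (ideal_sum J L) \<noteq> D"
proof -
  note Hd = assms[unfolded star_homog_def]
  show "star_fin_type D st B" by (rule Hd[THEN conjunct1])
  show "B \<subseteq> D" by (rule Hd[THEN conjunct2, THEN conjunct1])
  show "B \<noteq> D" by (rule Hd[THEN conjunct2, THEN conjunct2, THEN conjunct1])
  note Hc = Hd[THEN conjunct2, THEN conjunct2, THEN conjunct2]
  fix J L assume a: "star_fin_type D st J" "J \<subseteq> D" "J \<noteq> D" "B \<subseteq> J"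
            "star_fin_type D st L" "L \<subseteq> D" "L \<noteq> D" "B \<subseteq> L"
  have "star_fin_type D st J \<and> J \<subseteq> D \<and> J \<noteq> D \<and> B \<subseteq> J \<and>
            star_fin_type D st L \<and> L \<subseteq> D \<and> L \<noteq> D \<and> B \<subseteq> L" using a by (intro conjI)
  then show "st (ideal_sum J L) \<noteq> D" using Hc by blast
qed

lemma uniq: assumes H: "star_homog D st B" and M1: "max_star_ideal D st M1" "B \<subseteq> M1"
  and M2: "max_star_ideal D st M2" "B \<subseteq> M2" shows "M1 = M2"
proof (rule ccontr)
  assume ne: "M1 \<noteq> M2"
  note P1 = max_parts[OF M1(1)] and P2 = max_parts[OF M2(1)]
  note Hp = homog_parts[OF H]
  have "\<not> M1 \<subseteq> M2"
  proof
    assume "M1 \<subseteq> M2"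
    moreover have "M2 \<noteq> M1" using ne by simp
    ultimately have "M2 = D" by (rule max_maximal[OF M1(1) P2(8) P2(4)])
    then show False using P2(5) by blast
  qed
  then obtain s where s: "s \<in> M1" "s \<notin> M2" by blast
  then have sD: "s \<in> D" using P1(4) by blast
  obtain J where J: "star_fin_type D st J" "J \<subseteq> D" "J \<noteq> D" "B \<subseteq> J"
     "\<forall>L. frac_ideal D L \<and> L \<subseteq> D \<and> J \<subseteq> L \<and> s \<in> L \<longrightarrow> st L = D"
    by (rule sepE[OF M2(1) Hp(1) M2(2) sD s(2)])
  define Ts where "Ts = {s}"
  have TsD: "Ts \<subseteq> D" "finite Ts" unfolding Ts_def using sD by auto
  obtain L' where L': "fg_ideal D L'" "L' \<subseteq> D" "Ts \<subseteq> L'" "B \<subseteq> st L'" "star_fin_type D st (st L')" "st L' \<subseteq> D"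
     "\<forall>N. dmod D N \<and> B \<subseteq> N \<and> Ts \<subseteq> N \<longrightarrow> L' \<subseteq> N"
    by (rule consE[OF Hp(1) Hp(2) TsD(2) TsD(1)])
  have "Ts \<subseteq> M1" unfolding Ts_def using s(1) by blast
  have fL': "frac_ideal D L'" using L'(1) unfolding fg_ideal_def by blast
  have "L' \<subseteq> M1" using L'(7) P1(3) M1(2) \<open>Ts \<subseteq> M1\<close> by blast
  then have "st L' \<subseteq> M1" using st_mono[OF fL' P1(1)] P1(2) by blast
  then have LnD: "st L' \<noteq> D" using P1(4,5) by blast
  have sL: "s \<in> st L'" using L'(3) st_ext[OF fL'] unfolding Ts_def by blast
  define JL where "JL = ideal_sum J (st L')"
  have fJL: "frac_ideal D JL" unfolding JL_def
    using frac_sum[OF sft_parts(1)[OF J(1)] sft_parts(3)[OF L'(5)] J(2) L'(6)] .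
  have JLD: "JL \<subseteq> D" unfolding JL_def using sum_subD[OF J(2) L'(6)] .
  have "J \<subseteq> JL" unfolding JL_def using sum_left[OF sft_parts(3)[OF L'(5)]] .
  moreover have "s \<in> JL" unfolding JL_def using sum_right[OF sft_parts(3)[OF J(1)]] sL by blast
  ultimately have "st JL = D" using J(5)[rule_format, of JL] fJL JLD by blast
  then show False using Hp(4)[OF J(1-4) L'(5,6) LnD L'(4)] unfolding JL_def by simp
qed

lemma exist: assumes B: "star_fin_type D st B" "B \<subseteq> D" "B \<noteq> D"
  shows "\<exists>M. max_star_ideal D st M \<and> B \<subseteq> M"
proof -
  define \<A> where "\<A> = {N. star_ideal D st N \<and> N \<subseteq> D \<and> N \<noteq> D \<and> B \<subseteq> N}"
  have sB: "star_ideal D st B" using B(1) unfolding star_fin_type_def by blast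
  have BA: "B \<in> \<A>" unfolding \<A>_def using sB B by blast
  have "\<exists>M\<in>\<A>. \<forall>X\<in>\<A>. M \<subseteq> X \<longrightarrow> X = M"
  proof (rule subset_Zorn_nonempty)
    show "\<A> \<noteq> {}" using BA by blast
    fix C assume C: "C \<noteq> {}" "subset.chain \<A> C"
    have CA: "C \<subseteq> \<A>" and ch: "\<forall>X\<in>C. \<forall>Y\<in>C. X \<subseteq> Y \<or> Y \<subseteq> X" using C(2) unfolding subset_chain_def by blast+
    have mem: "\<And>X. X \<in> C \<Longrightarrow> star_ideal D st X \<and> X \<subseteq> D \<and> X \<noteq> D \<and> B \<subseteq> X" using CA unfolding \<A>_def by blast
    have dX: "\<And>X. X \<in> C \<Longrightarrow> dmod D X" using mem frac_dmod unfolding star_ideal_def by blast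
    have fX: "\<And>X. X \<in> C \<Longrightarrow> frac_ideal D X" "\<And>X. X \<in> C \<Longrightarrow> st X = X" using mem unfolding star_ideal_def by blast+
    obtain X0 where X0: "X0 \<in> C" using C(1) by blast
    define U where "U = \<Union>C"
    have dU: "dmod D U" unfolding dmod_def
    proof (intro conjI ballI)
      show "0 \<in> U" unfolding U_def using dmodD(1)[OF dX[OF X0]] X0 by blast
      fix x y assume "x \<in> U" "y \<in> U"
      then obtain X Y where XY: "X \<in> C" "Y \<in> C" "x \<in> X" "y \<in> Y" unfolding U_def by blast
      then have "X \<subseteq> Y \<or> Y \<subseteq> X" using ch by blast
      then show "x + y \<in> U"
      proof
        assume "X \<subseteq> Y" then have "x + y \<in> Y" using dmodD(2)[OF dX[OF XY(2)]] XY by blast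
        then show ?thesis unfolding U_def using XY by blast
      next
        assume "Y \<subseteq> X" then have "x + y \<in> X" using dmodD(2)[OF dX[OF XY(1)]] XY by blast
        then show ?thesis unfolding U_def using XY by blast
      qed
    next
      fix d x assume "d \<in> D" "x \<in> U"
      then obtain X where "X \<in> C" "x \<in> X" unfolding U_def by blast
      then show "d * x \<in> U" unfolding U_def using dmodD(3)[OF dX] \<open>d \<in> D\<close> by blast
    qed
    have UD: "U \<subseteq> D" unfolding U_def using mem by blast
    have BU: "B \<subseteq> U" unfolding U_def using mem X0 by blast
    obtain b where "b \<in> B" "b \<noteq> 0" using sft_parts(4)[OF B(1)] by blast
    then have "U \<noteq> {0}" using BU by blast
    then have fU: "frac_ideal D U" using frac_sub[OF dU UD] by blast
    have "st U \<subseteq> U"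
    proof
      fix z assume "z \<in> st U"
      then obtain J where J: "fg_ideal D J" "J \<subseteq> U" "z \<in> st J"
        using fc fU unfolding finite_character_def by blast
      then obtain S where S: "finite S" "J = dgen D S" unfolding fg_ideal_def by blast
      have "S \<subseteq> \<Union>C" using dgen_incl[of S] S(2) J(2) unfolding U_def by blast
      then obtain X where X: "X \<in> C" "S \<subseteq> X" using finite_subset_Union_chain[OF S(1) _ C(1,2)] by blast
      have "J \<subseteq> X" using dgen_sub[OF dX[OF X(1)] X(2)] S(2) by blast
      then have "st J \<subseteq> X" using st_mono[OF _ fX(1)[OF X(1)]] fX(2)[OF X(1)] J(1) unfolding fg_ideal_def by blast
      then show "z \<in> U" using J(3) X(1) unfolding U_def by blast
    qed
    then have "st U = U" using st_ext[OF fU] by blast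
    then have sU: "star_ideal D st U" unfolding star_ideal_def using fU by blast
    have "1 \<notin> U" unfolding U_def using one_notin dX mem by blast
    then have "U \<noteq> D" using D1 by blast
    then show "\<Union>C \<in> \<A>" unfolding \<A>_def using sU UD BU unfolding U_def by blast
  qed
  then obtain M where M: "M \<in> \<A>" "\<forall>X\<in>\<A>. M \<subseteq> X \<longrightarrow> X = M" by blast
  have "max_star_ideal D st M" unfolding max_star_ideal_def
  proof (intro conjI allI impI)
    show "star_ideal D st M" "M \<subseteq> D" "M \<noteq> D" using M(1) unfolding \<A>_def by blast+
    fix N assume "star_ideal D st N \<and> N \<subseteq> D \<and> N \<noteq> D \<and> M \<subseteq> N"
    moreover then have "N \<in> \<A>" using M(1) unfolding \<A>_def by blast
    ultimately show "N = M" using M(2) by blast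
  qed
  then show ?thesis using M(1) unfolding \<A>_def by blast
qed

end

context SD begin

lemma part2:
  assumes A: "dmod D A" "A \<subseteq> D" "A \<noteq> {0}" and B: "dmod D B" "B \<subseteq> D" "B \<noteq> {0}"
  and AB: "st (ideal_sum A B) = D" and H: "star_homog D st B"
  shows "ideal_prod (st (ideal_prod A B)) (localization D (M_of D st B)) \<inter> D = B"
proof -
  note Hp = homog_parts[OF H]
  have fB: "frac_ideal D B" "st B = B" using sft_parts[OF Hp(1)] by blast+
  obtain M where M: "max_star_ideal D st M" "B \<subseteq> M" using exist[OF Hp(1-3)] by blast
  have MB: "M_of D st B = M" unfolding M_of_def
  proof (rule the_equality)
    show "max_star_ideal D st M \<and> B \<subseteq> M" using M by blast
    fix M' assume "max_star_ideal D st M' \<and> B \<subseteq> M'" then show "M' = M" using uniq[OF H] M by blast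
  qed
  note Mp = max_parts[OF M(1)]
  obtain b0 where b0: "b0 \<in> B" "b0 \<noteq> 0" using sft_parts(4)[OF Hp(1)] by blast
  have "ideal_sum A B \<noteq> {0}" using sum_right[OF A(1), of B] b0 by blast
  then have fS: "frac_ideal D (ideal_sum A B)" using frac_sub[OF dmod_sum[OF A(1) B(1)] sum_subD[OF A(2) B(2)]] by blast
  have "\<not> A \<subseteq> M"
  proof
    assume AM: "A \<subseteq> M"
    have "ideal_sum A B \<subseteq> M"
    proof
      fix z assume "z \<in> ideal_sum A B"
      then obtain x y where "x \<in> A" "y \<in> B" "z = x + y" unfolding ideal_sum_def by blast
      then show "z \<in> M" using AM M(2) dmodD(2)[OF Mp(3)] by blast
    qed
    then have "st (ideal_sum A B) \<subseteq> M" using st_mono[OF fS Mp(1)] Mp(2) by blast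
    then show False using AB Mp(4,5) by blast
  qed
  then obtain a where a: "a \<in> A" "a \<notin> M" by blast
  have aD: "a \<in> D" "a \<noteq> 0" using a A(2) Mp(7) by auto
  define P where "P = ideal_prod A B"
  have PB: "P \<subseteq> B" unfolding P_def iprod_fs
  proof (rule fs_sub)
    show "0 \<in> B" using dmodD(1)[OF B(1)] .
    fix u y assume "prods A B u" "y \<in> B"
    then obtain x z where "x \<in> A" "z \<in> B" "u = x * z" unfolding prods_def by blast
    then have "u \<in> B" using dmodD(3)[OF B(1)] A(2) by blast
    then show "u + y \<in> B" using dmodD(2)[OF B(1)] \<open>y \<in> B\<close> by blast
  qed
  have PD: "P \<subseteq> D" using PB B(2) by blast
  have abP: "a * b \<in> P" if "b \<in> B" for b unfolding P_def iprod_fs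
    by (rule fs_single) (use a(1) that in \<open>auto simp: prods_def\<close>)
  have "a * b0 \<noteq> 0" using aD b0 by simp
  then have "P \<noteq> {0}" using abP[OF b0(1)] by blast
  then have fP: "frac_ideal D P" using frac_sub[OF _ PD] dmod_iprod[OF A(1)] unfolding P_def by blast
  have stPB: "st P \<subseteq> B" using st_mono[OF fP fB(1) PB] fB(2) by simp
  show ?thesis unfolding MB P_def[symmetric]
  proof
    show "ideal_prod (st P) (localization D M) \<inter> D \<subseteq> B"
    proof
      fix x assume "x \<in> ideal_prod (st P) (localization D M) \<inter> D"
      then have x: "x \<in> ideal_prod (st P) (localization D M)" "x \<in> D" by blast+
      define T where "T = {y. \<exists>s\<in>D. s \<notin> M \<and> s * y \<in> B}"
      have "ideal_prod (st P) (localization D M) \<subseteq> T" unfolding iprod_fs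
      proof (rule fs_sub)
        show "0 \<in> T" unfolding T_def using D1 Mp(6) dmodD(1)[OF B(1)] by force
        fix u y assume u: "prods (st P) (localization D M) u" and y: "y \<in> T"
        then obtain p q where pq: "p \<in> st P" "q \<in> localization D M" "u = p * q" unfolding prods_def by blast
        then obtain c t where ct: "c \<in> D" "t \<in> D" "t \<notin> M" "q = c / t" unfolding localization_def by blast
        obtain s where s: "s \<in> D" "s \<notin> M" "s * y \<in> B" using y unfolding T_def by blast
        have t0: "t \<noteq> 0" using ct(3) Mp(7) by auto
        have tsM: "t * s \<notin> M" using prime[OF M(1) ct(2,3) s(1)] s(2) by blast
        have tsD: "t * s \<in> D" using Dmul ct(2) s(1) by blast
        have eq: "(t * s) * (u + y) = s * (c * p) + t * (s * y)" using t0 pq(3) ct(4)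
          by (simp add: field_simps)
        have "p \<in> B" using pq(1) stPB by blast
        then have "s * (c * p) \<in> B" using dmodD(3)[OF B(1)] ct(1) s(1) by blast
        moreover have "t * (s * y) \<in> B" using dmodD(3)[OF B(1)] ct(2) s(3) by blast
        ultimately have "(t * s) * (u + y) \<in> B" unfolding eq using dmodD(2)[OF B(1)] by blast
        then show "u + y \<in> T" unfolding T_def using tsM tsD by blast
      qed
      then obtain s where s: "s \<in> D" "s \<notin> M" "s * x \<in> B" using x(1) unfolding T_def by blast
      obtain J where J: "star_fin_type D st J" "J \<subseteq> D" "J \<noteq> D" "B \<subseteq> J"
         "\<forall>L. frac_ideal D L \<and> L \<subseteq> D \<and> J \<subseteq> L \<and> s \<in> L \<longrightarrow> st L = D"
        by (rule sepE[OF M(1) Hp(1) M(2) s(1,2)])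
      define Ts where "Ts = {s}"
      have TsD: "Ts \<subseteq> D" "finite Ts" unfolding Ts_def using s(1) by auto
      obtain K' where K': "fg_ideal D K'" "K' \<subseteq> D" "Ts \<subseteq> K'" "B \<subseteq> st K'" "star_fin_type D st (st K')" "st K' \<subseteq> D"
         "\<forall>N. dmod D N \<and> B \<subseteq> N \<and> Ts \<subseteq> N \<longrightarrow> K' \<subseteq> N"
        by (rule consE[OF Hp(1) Hp(2) TsD(2) TsD(1)])
      have fK': "frac_ideal D K'" using K'(1) unfolding fg_ideal_def by blast
      have KD: "st K' = D"
      proof (rule ccontr)
        assume LnD: "st K' \<noteq> D"
        have sL: "s \<in> st K'" using K'(3) st_ext[OF fK'] unfolding Ts_def by blast
        define JL where "JL = ideal_sum J (st K')"
        have fJL: "frac_ideal D JL" unfolding JL_def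
          using frac_sum[OF sft_parts(1)[OF J(1)] sft_parts(3)[OF K'(5)] J(2) K'(6)] .
        have JLD: "JL \<subseteq> D" unfolding JL_def using sum_subD[OF J(2) K'(6)] .
        have "J \<subseteq> JL" unfolding JL_def using sum_left[OF sft_parts(3)[OF K'(5)]] .
        moreover have "s \<in> JL" unfolding JL_def using sum_right[OF sft_parts(3)[OF J(1)]] sL by blast
        ultimately have "st JL = D" using J(5)[rule_format, of JL] fJL JLD by blast
        then show False using Hp(4)[OF J(1-4) K'(5,6) LnD K'(4)] unfolding JL_def by simp
      qed
      have "Ts \<subseteq> {z. x * z \<in> B}" unfolding Ts_def using s(3) by (simp add: mult.commute)
      then have "K' \<subseteq> {z. x * z \<in> B}" using K'(7) dmod_pre[OF B(1) x(2)] by blast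
      moreover have "star_ideal D st B" using fB unfolding star_ideal_def by blast
      ultimately show "x \<in> B" using key[OF fK' KD x(2)] by blast
    qed
    show "B \<subseteq> ideal_prod (st P) (localization D M) \<inter> D"
    proof
      fix b assume b: "b \<in> B"
      have "a * b \<in> st P" using abP[OF b] st_ext[OF fP] by blast
      moreover have "1 / a \<in> localization D M" unfolding localization_def using D1 aD(1) a(2) by blast
      moreover have "b = (a * b) * (1 / a)" using aD(2) by simp
      ultimately have "prods (st P) (localization D M) b" unfolding prods_def by blast
      then show "b \<in> ideal_prod (st P) (localization D M) \<inter> D" using b B(2) iprod_fs fs_single by blast
    qed
  qed
qed

end

theorem corollaryH:
  fixes D :: "('k::field) set" and st :: "'k set \<Rightarrow> 'k set" and A B :: "'k set"
  assumes "domain_with_qf D"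
    and "star_operation D st" and "finite_character D st"
    and "dmod D A" and "A \<subseteq> D" and "A \<noteq> {0}"
    and "dmod D B" and "B \<subseteq> D" and "B \<noteq> {0}"
    and "st (ideal_sum A B) = D"
  shows "(\<forall>I. star_homog D st I \<and> ideal_prod A B \<subseteq> I \<longrightarrow> A \<subseteq> I \<or> B \<subseteq> I)
       \<and> (star_homog D st B \<longrightarrow>
            ideal_prod (st (ideal_prod A B)) (localization D (M_of D st B)) \<inter> D = B)"
proof -
  interpret SD D st using assms(1-3) by unfold_locales
  show ?thesis
  proof (intro conjI allI impI)
    fix I assume "star_homog D st I \<and> ideal_prod A B \<subseteq> I"
    then show "A \<subseteq> I \<or> B \<subseteq> I" using part1[OF assms(4-10)] by blast
  next
    assume "star_homog D st B"
    then show "ideal_prod (st (ideal_prod A B)) (localization D (M_of D st B)) \<inter> D = B"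
      using part2[OF assms(4-10)] by blast
  qed
qed

end
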